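(* Let $K\neq0$. For all $A,P,B,Q\in\mathbb S^3_K$ with $A\neq P$ and $B\neq Q$, $|\operatorname{cosq}_K(\overrightarrow{AP},\overrightarrow{BQ})|\le1$.
   Context: $\mathbb S^3_K$ is the open hemisphere of radius $1/\sqrt K$ of the round 3-sphere if $K>0$, and 3-dimensional hyperbolic space of curvature $K$ if $K<0$, with intrinsic metric $\rho$. Let $\kappa=\sqrt{|K|}$. For $A\neq P$, $B\neq Q$ put $x=\rho(A,P)$, $y=\rho(B,Q)$, $a=\rho(A,B)$, $b=\rho(P,Q)$, $d=\rho(P,B)$, $f=\rho(A,Q)$; for $K>0$ $$\operatorname{cosq}_K(\overrightarrow{AP},\overrightarrow{BQ})=\frac{\cos\kappa b+\cos\kappa x\cos\kappa y}{\sin\kappa x\sin\kappa y}-\frac{(\cos\kappa x+\cos\kappa d)(\cos\kappa y+\cos\kappa f)}{(1+\cos\kappa a)\sin\kappa x\sin\kappa y},$$ and for $K<0$ $$\operatorname{cosq}_K(\overrightarrow{AP},\overrightarrow{BQ})=\frac{(\cosh\kappa x+\cosh\kappa d)(\cosh\kappa y+\cosh\kappa f)}{(1+\cosh\kappa a)\sinh\kappa x\sinh\kappa y}-\frac{\cosh\kappa b+\cosh\kappa x\cosh\kappa y}{\sinh\kappa x\sinh\kappa y}.$$ *)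

theory Defs
  imports "HOL-Analysis.Analysis"
begin

text \<open>Model space S^3_K embedded in R^4.
  K > 0: the open hemisphere {x. |x|^2 = 1/K, x_4 > 0} of the round sphere of radius 1/sqrt K,
         with intrinsic (great-circle) distance arccos(K <x,y>)/sqrt K.
  K < 0: the hyperboloid model {x. <x,x>_M = 1/K, x_1 > 0} with Minkowski form
         <x,y>_M = -x_1 y_1 + x_2 y_2 + x_3 y_3 + x_4 y_4 and intrinsic distance
         arcosh(K <x,y>_M)/sqrt(-K); this is hyperbolic 3-space of curvature K.\<close>

definition minkowski :: "real^4 \<Rightarrow> real^4 \<Rightarrow> real" where
  "minkowski x y = - (x$1 * y$1) + x$2 * y$2 + x$3 * y$3 + x$4 * y$4"

definition S3 :: "real \<Rightarrow> (real^4) set" where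
  "S3 K = (if K > 0 then {x. x \<bullet> x = 1 / K \<and> x$4 > 0}
           else {x. minkowski x x = 1 / K \<and> x$1 > 0})"

definition rhoK :: "real \<Rightarrow> real^4 \<Rightarrow> real^4 \<Rightarrow> real" where
  "rhoK K x y = (if K > 0 then arccos (K * (x \<bullet> y)) / sqrt K
                 else arcosh (K * minkowski x y) / sqrt (- K))"

definition cosq :: "real \<Rightarrow> real^4 \<Rightarrow> real^4 \<Rightarrow> real^4 \<Rightarrow> real^4 \<Rightarrow> real" where
  "cosq K A P B Q =
    (let k = sqrt \<bar>K\<bar>;
         x = rhoK K A P; y = rhoK K B Q; a = rhoK K A B;
         b = rhoK K P Q; d = rhoK K P B; f = rhoK K A Q
     in if K > 0 then
          (cos (k*b) + cos (k*x) * cos (k*y)) / (sin (k*x) * sin (k*y))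
          - ((cos (k*x) + cos (k*d)) * (cos (k*y) + cos (k*f)))
             / ((1 + cos (k*a)) * sin (k*x) * sin (k*y))
        else
          ((cosh (k*x) + cosh (k*d)) * (cosh (k*y) + cosh (k*f)))
             / ((1 + cosh (k*a)) * sinh (k*x) * sinh (k*y))
          - (cosh (k*b) + cosh (k*x) * cosh (k*y)) / (sinh (k*x) * sinh (k*y)))"

end

theory Submission
  imports Defs
begin

lemma core:
  fixes g :: "real^4 \<Rightarrow> real^4 \<Rightarrow> real" and e sx sy :: real and u p v q :: "real^4"
  assumes addL: "\<And>x y z. g (x + y) z = g x z + g y z"
    and diffL: "\<And>x y z. g (x - y) z = g x z - g y z"
    and scL: "\<And>c x z. g (c *\<^sub>R x) z = c * g x z"
    and sym: "\<And>x y. g x y = g y x"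
    and e: "e * e = 1"
    and nu: "g u u = e" and np: "g p p = e" and nv: "g v v = e" and nq: "g q q = e"
    and pos: "\<And>w. g w v = 0 \<Longrightarrow> g w w \<ge> 0"
    and sx: "sx > 0" "sx^2 = e * (1 - (g u p)^2)"
    and sy: "sy > 0" "sy^2 = e * (1 - (g v q)^2)"
    and D: "1 + e * g u v \<noteq> 0"
  shows "\<bar>(g p q + e * g u p * g v q) / (sx * sy)
          - e * (g u p + g p v) * (g v q + g u q) / ((1 + e * g u v) * sx * sy)\<bar> \<le> 1"
proof -
  have addR: "\<And>x y z. g z (x + y) = g z x + g z y" using addL sym by metis
  have diffR: "\<And>x y z. g z (x - y) = g z x - g z y" using diffL sym by metis
  have scR: "\<And>c x z. g z (c *\<^sub>R x) = c * g z x" using scL sym by metis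
  have ee: "\<And>z. e * (e * z) = z" using e by (metis mult.assoc mult_1)
  note G = addL diffL scL addR diffR scR
  define a where "a = g u v"
  define x where "x = g u p"
  define y where "y = g v q"
  define b where "b = g p q"
  define d where "d = g p v"
  define f where "f = g u q"
  define Dn where "Dn = 1 + e * a"
  have Dn: "Dn \<noteq> 0" using D by (simp add: Dn_def a_def)
  define w1 where "w1 = p - (e * x) *\<^sub>R u"
  define w2 where "w2 = q - (e * y) *\<^sub>R v"
  define t where "t = g v w1"
  have t: "t = d - e * x * a"
    by (simp add: t_def w1_def G d_def x_def a_def sym[of v p] sym[of v u])
  define z where "z = w1 - (e * t / Dn) *\<^sub>R (u + v)"
  have uw1: "g u w1 = 0" using e by (simp add: w1_def G nu x_def)
  have w1w1: "g w1 w1 = sx^2"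
    unfolding sx by (simp add: w1_def G nu np x_def sym[of p u] ee algebra_simps power2_eq_square)
  have w2w2: "g w2 w2 = sy^2"
    unfolding sy by (simp add: w2_def G nv nq y_def sym[of q v] ee algebra_simps power2_eq_square)
  have w2v: "g w2 v = 0" using e by (simp add: w2_def G nv y_def sym[of q v])
  have zv: "g z v = 0"
  proof -
    have "g z v = g w1 v - (e * t / Dn) * (a + e)"
      by (simp add: z_def G nv a_def)
    also have "\<dots> = t - t * (e*a + e*e) / Dn" by (simp add: t_def sym algebra_simps)
    also have "\<dots> = t - t * Dn / Dn" by (simp add: Dn_def e algebra_simps)
    also have "\<dots> = 0" using Dn by simp
    finally show ?thesis .
  qed
  have zz: "g z z = sx^2"
  proof -
    define uv where "uv = u + v"
    have guv: "g uv w1 = t" "g w1 uv = t" using uw1 by (simp_all add: uv_def G t_def sym[of w1])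
    have guv2: "g uv uv = 2 * e * Dn"
      using e by (simp add: uv_def G nu nv a_def sym[of v u] Dn_def algebra_simps)
    have zd: "z = w1 - (e * t / Dn) *\<^sub>R uv" by (simp add: z_def uv_def)
    have "g z z = g w1 w1 - 2 * (e*t/Dn) * t + (e*t/Dn)^2 * (2*e*Dn)"
      unfolding zd using guv guv2 by (simp add: G power2_eq_square algebra_simps)
    also have "\<dots> = g w1 w1" using Dn by (simp add: power2_eq_square field_simps ee)
    finally show ?thesis using w1w1 by simp
  qed
  have zw2: "g z w2 * Dn = (b + e*x*y) * Dn - e * (x + d) * (y + f)"
  proof -
    have g1: "g w1 w2 = b - e*y*d - e*x*f + e*e*x*y*a"
      by (simp add: w1_def w2_def G b_def x_def y_def d_def f_def a_def sym[of v u] sym[of q u] sym[of v p] algebra_simps)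
    have g2: "g (u+v) w2 = f - e*y*a"
      using e by (simp add: w2_def G f_def y_def a_def nv algebra_simps)
    have "g z w2 = g w1 w2 - (e*t/Dn) * g (u+v) w2" by (simp add: z_def G)
    hence "g z w2 * Dn = g w1 w2 * Dn - e * t * g (u+v) w2" using Dn by (simp add: field_simps)
    also have "\<dots> = (b + e*x*y) * Dn - e * (x + d) * (y + f)"
      unfolding g1 g2 t Dn_def
      by (simp add: algebra_simps)
    finally show ?thesis .
  qed
  have CS: "(g z w2)^2 \<le> sx^2 * sy^2"
  proof -
    define s where "s = g z w2 / sy^2"
    have sy2: "sy^2 > 0" using sy(1) by simp
    have "g (z - s *\<^sub>R w2) v = 0" using zv w2v by (simp add: G)
    hence "0 \<le> g (z - s *\<^sub>R w2) (z - s *\<^sub>R w2)" by (rule pos)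
    also have "\<dots> = sx^2 - 2 * s * g z w2 + s^2 * sy^2"
      using zz w2w2 by (simp add: G sym[of w2 z] power2_eq_square algebra_simps)
    also have "\<dots> = sx^2 - (g z w2)^2 / sy^2"
      using sy2 by (simp add: s_def power2_eq_square field_simps)
    finally have "(g z w2)^2 / sy^2 \<le> sx^2" by simp
    thus ?thesis using sy2 by (simp add: field_simps)
  qed
  have expr: "(b + e * x * y) / (sx * sy) - e * (x + d) * (y + f) / ((1 + e * a) * sx * sy)
      = g z w2 / (sx * sy)"
  proof -
    have "(b + e * x * y) / (sx * sy) - e * (x + d) * (y + f) / ((1 + e * a) * sx * sy)
       = ((b + e*x*y) * Dn - e * (x + d) * (y + f)) / (Dn * sx * sy)"
    proof -
      have h1: "(b + e*x*y) / (sx * sy) = (b + e*x*y) * Dn / (Dn * sx * sy)" using Dn by simp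
      have h2: "(1 + e * a) * sx * sy = Dn * sx * sy" by (simp add: Dn_def)
      show ?thesis unfolding h1 h2 by (rule diff_divide_distrib[symmetric])
    qed
    also have "\<dots> = g z w2 * Dn / (Dn * sx * sy)" using zw2 by simp
    also have "\<dots> = g z w2 / (sx * sy)" using Dn by simp
    finally show ?thesis .
  qed
  have "\<bar>g z w2\<bar> \<le> sx * sy"
  proof -
    have "(g z w2)^2 \<le> (sx * sy)^2" using CS by (simp add: power_mult_distrib)
    hence "\<bar>g z w2\<bar> \<le> \<bar>sx * sy\<bar>" by (simp only: abs_le_square_iff)
    thus ?thesis using sx(1) sy(1) by simp
  qed
  moreover have sp: "sx * sy > 0" using sx(1) sy(1) by simp
  ultimately have "\<bar>g z w2 / (sx * sy)\<bar> \<le> 1"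
    by (simp only: abs_divide abs_of_pos[OF sp] pos_divide_le_eq[OF sp] mult_1)
  hence "\<bar>(b + e * x * y) / (sx * sy) - e * (x + d) * (y + f) / ((1 + e * a) * sx * sy)\<bar> \<le> 1"
    by (simp only: expr)
  thus ?thesis unfolding a_def b_def d_def f_def x_def y_def .
qed

lemma mink_addL: "minkowski (x + y) z = minkowski x z + minkowski y z"
  by (simp add: minkowski_def algebra_simps)
lemma mink_diffL: "minkowski (x - y) z = minkowski x z - minkowski y z"
  by (simp add: minkowski_def algebra_simps)
lemma mink_scL: "minkowski (c *\<^sub>R x) z = c * minkowski x z"
  by (simp add: minkowski_def algebra_simps)
lemma mink_addR: "minkowski z (x + y) = minkowski z x + minkowski z y"
  by (simp add: minkowski_def algebra_simps)
lemma mink_scR: "minkowski z (c *\<^sub>R x) = c * minkowski z x"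
  by (simp add: minkowski_def algebra_simps)
lemma mink_diffR: "minkowski z (x - y) = minkowski z x - minkowski z y"
  by (simp add: minkowski_def algebra_simps)
lemma mink_sym: "minkowski x y = minkowski y x"
  by (simp add: minkowski_def algebra_simps)

lemma cs3: "((a1::real)*b1 + a2*b2 + a3*b3)^2 \<le> (a1^2+a2^2+a3^2)*(b1^2+b2^2+b3^2)"
proof -
  have "(a1^2+a2^2+a3^2)*(b1^2+b2^2+b3^2) - (a1*b1 + a2*b2 + a3*b3)^2
      = (a1*b2-a2*b1)^2 + (a1*b3-a3*b1)^2 + (a2*b3-a3*b2)^2"
    by (simp add: power2_eq_square algebra_simps)
  moreover have "(a1*b2-a2*b1)^2 + (a1*b3-a3*b1)^2 + (a2*b3-a3*b2)^2 \<ge> 0" by simp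
  ultimately show ?thesis by linarith
qed

lemma mink_pos:
  assumes vv: "minkowski v v = -1" and wv: "minkowski w v = 0"
  shows "minkowski w w \<ge> 0 \<and> (minkowski w w = 0 \<longrightarrow> w = 0)"
proof -
  define S where "S = w$2 * v$2 + w$3 * v$3 + w$4 * v$4"
  define V where "V = (v$2)^2 + (v$3)^2 + (v$4)^2"
  define W where "W = (w$2)^2 + (w$3)^2 + (w$4)^2"
  have S: "w$1 * v$1 = S" using wv by (simp add: minkowski_def S_def)
  have V: "(v$1)^2 = 1 + V" using vv by (simp add: minkowski_def V_def power2_eq_square)
  have mw: "minkowski w w = W - (w$1)^2" by (simp add: minkowski_def W_def power2_eq_square)
  have cs: "S^2 \<le> W * V" unfolding S_def W_def V_def by (rule cs3)
  have "(w$1)^2 * (1 + V) = S^2" using S V by (metis power_mult_distrib)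
  hence key: "(w$1)^2 * (1 + V) \<le> W * V" using cs by simp
  have V0: "V \<ge> 0" "W \<ge> 0" by (simp_all add: V_def W_def)
  have "(w$1)^2 \<le> W"
  proof (rule ccontr)
    assume "\<not> ?thesis"
    hence "W < (w$1)^2" by simp
    hence "W * V \<le> (w$1)^2 * V" using V0 by (simp add: mult_right_mono)
    moreover have "(w$1)^2 * (1 + V) = (w$1)^2 + (w$1)^2 * V" by (simp add: algebra_simps)
    ultimately have "(w$1)^2 \<le> 0" using key by linarith
    with \<open>W < (w$1)^2\<close> V0 show False by simp
  qed
  moreover have "minkowski w w = 0 \<longrightarrow> w = 0"
  proof
    assume "minkowski w w = 0"
    hence Ww: "W = (w$1)^2" using mw by simp
    moreover have "(w$1)^2 * (1 + V) = (w$1)^2 + (w$1)^2 * V" by (simp add: algebra_simps)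
    ultimately have "(w$1)^2 \<le> 0" using key by (simp add: mult.commute)
    hence w1: "w$1 = 0" by simp
    with Ww have "W = 0" by simp
    moreover have "(w$2)^2 \<ge> 0" "(w$3)^2 \<ge> 0" "(w$4)^2 \<ge> 0" by simp_all
    ultimately have "(w$2)^2 = 0" "(w$3)^2 = 0" "(w$4)^2 = 0" unfolding W_def by linarith+
    hence "w$2 = 0 \<and> w$3 = 0 \<and> w$4 = 0" by simp
    with w1 show "w = 0" by (simp add: vec_eq_iff forall_4)
  qed
  ultimately show ?thesis using mw by simp
qed

lemma hyp_pair:
  assumes uu: "minkowski u u = -1" and pp: "minkowski p p = -1" and u1: "u$1 > 0" and p1: "p$1 > 0"
  shows "minkowski u p \<le> -1 \<and> (u \<noteq> p \<longrightarrow> minkowski u p < -1)"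
proof -
  define x where "x = minkowski u p"
  define w where "w = p + x *\<^sub>R u"
  have xu: "minkowski u p = x" "minkowski p u = x" by (simp_all add: x_def mink_sym)
  have wu: "minkowski w u = 0" using uu
    by (simp add: w_def mink_addL mink_scL xu)
  have ww: "minkowski w w = x^2 - 1"
    using uu pp by (simp add: w_def mink_addL mink_scL mink_addR mink_scR xu power2_eq_square)
  have pos: "x^2 - 1 \<ge> 0" using mink_pos[OF uu wu] ww by simp
  define U where "U = (u$2)^2 + (u$3)^2 + (u$4)^2"
  define P where "P = (p$2)^2 + (p$3)^2 + (p$4)^2"
  define S where "S = u$2 * p$2 + u$3 * p$3 + u$4 * p$4"
  have U: "(u$1)^2 = 1 + U" using uu by (simp add: minkowski_def U_def power2_eq_square)
  have P: "(p$1)^2 = 1 + P" using pp by (simp add: minkowski_def P_def power2_eq_square)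
  have U0: "U \<ge> 0" "P \<ge> 0" by (simp_all add: U_def P_def)
  have cs: "S^2 \<le> U * P" unfolding S_def U_def P_def by (rule cs3)
  have "U * P < (1+U)*(1+P)" using U0 by (simp add: algebra_simps)
  hence "S^2 < (u$1 * p$1)^2" using cs U P by (simp add: power_mult_distrib)
  hence "S < u$1 * p$1"
    by (rule power2_less_imp_less) (simp add: u1 p1 less_imp_le)
  hence xneg: "x < 0" by (simp add: x_def minkowski_def S_def)
  have x1: "x \<le> -1"
  proof (rule ccontr)
    assume "\<not> x \<le> -1"
    hence "(-x)^2 < 1^2" using xneg by (intro power_strict_mono) auto
    hence "x^2 < 1" by simp
    with pos show False by simp
  qed
  moreover have "u \<noteq> p \<longrightarrow> x < -1"
  proof
    assume up: "u \<noteq> p"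
    show "x < -1"
    proof (rule ccontr)
      assume "\<not> x < -1"
      hence "x = -1" using x1 by simp
      hence "minkowski w w = 0" using ww by simp
      hence "w = 0" using mink_pos[OF uu wu] by simp
      hence "p = u" using \<open>x = -1\<close> by (simp add: w_def algebra_simps)
      with up show False by simp
    qed
  qed
  ultimately show ?thesis by (simp add: x_def)
qed

lemma sph_pair:
  fixes u p :: "real^4"
  assumes uu: "inner u u = 1" and pp: "inner p p = 1" and u4: "u$4 > 0" and p4: "p$4 > 0"
  shows "-1 < inner u p \<and> inner u p \<le> 1 \<and> (u \<noteq> p \<longrightarrow> inner u p < 1)"
proof -
  have nu: "norm u = 1" using uu by (simp add: norm_eq_sqrt_inner)
  have np: "norm p = 1" using pp by (simp add: norm_eq_sqrt_inner)
  have ab: "\<bar>inner u p\<bar> \<le> 1" using Cauchy_Schwarz_ineq2[of u p] nu np by simp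
  have m1: "inner u p \<noteq> -1"
  proof
    assume h: "inner u p = -1"
    have "inner (u + p) (u + p) = 0" using uu pp h by (simp add: inner_add inner_commute[of p u])
    hence "u + p = 0" by simp
    hence "(u + p)$4 = 0" by simp
    with u4 p4 show False by simp
  qed
  have p1: "u \<noteq> p \<longrightarrow> inner u p \<noteq> 1"
  proof (intro impI notI)
    assume up: "u \<noteq> p" and h: "inner u p = 1"
    have "inner (u - p) (u - p) = 0" using uu pp h by (simp add: inner_diff inner_commute[of p u])
    hence "u - p = 0" by simp
    with up show False by simp
  qed
  show ?thesis using ab m1 p1 by (auto simp: abs_le_iff)
qed

lemma rearr:
  fixes x d y f a b s t :: real
  shows "((-x) + (-d)) * ((-y) + (-f)) / ((1 + (-a)) * s * t) - ((-b) + (-x) * (-y)) / (s * t)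
    = (b + -1 * x * y) / (s * t) - (-1) * (x + d) * (y + f) / ((1 + -1 * a) * s * t)"
  by (simp add: algebra_simps diff_divide_distrib add_divide_distrib)

theorem corollary3p3:
  fixes K :: real and A P B Q :: "real^4"
  assumes "K \<noteq> 0"
    and "A \<in> S3 K" "P \<in> S3 K" "B \<in> S3 K" "Q \<in> S3 K"
    and "A \<noteq> P" "B \<noteq> Q"
  shows "\<bar>cosq K A P B Q\<bar> \<le> 1"
proof (cases "K > 0")
  case True
  define k where "k = sqrt K"
  have k0: "k > 0" using True by (simp add: k_def)
  have kk: "k * k = K" using True by (simp add: k_def)
  have kabs: "sqrt \<bar>K\<bar> = k" using True by (simp add: k_def)
  have memS: "\<And>X. X \<in> S3 K \<Longrightarrow> inner (k *\<^sub>R X) (k *\<^sub>R X) = 1 \<and> (k *\<^sub>R X)$4 > 0"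
    using True k0 kk by (simp add: S3_def)
  have rho: "\<And>X Y. sqrt \<bar>K\<bar> * rhoK K X Y = arccos (inner (k *\<^sub>R X) (k *\<^sub>R Y))"
    using True k0 kk unfolding kabs by (simp add: rhoK_def mult.assoc[symmetric] k_def[symmetric])
  define u where "u = k *\<^sub>R A"
  define p where "p = k *\<^sub>R P"
  define v where "v = k *\<^sub>R B"
  define q where "q = k *\<^sub>R Q"
  have U: "inner u u = 1" "u$4 > 0" using memS[OF assms(2)] by (simp_all add: u_def)
  have Pp: "inner p p = 1" "p$4 > 0" using memS[OF assms(3)] by (simp_all add: p_def)
  have V: "inner v v = 1" "v$4 > 0" using memS[OF assms(4)] by (simp_all add: v_def)
  have Qq: "inner q q = 1" "q$4 > 0" using memS[OF assms(5)] by (simp_all add: q_def)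
  have up: "u \<noteq> p" using assms(6) k0 by (simp add: u_def p_def)
  have vq: "v \<noteq> q" using assms(7) k0 by (simp add: v_def q_def)
  have sup: "-1 < inner u p" "inner u p < 1" using sph_pair[OF U(1) Pp(1) U(2) Pp(2)] up by auto
  have svq: "-1 < inner v q" "inner v q < 1" using sph_pair[OF V(1) Qq(1) V(2) Qq(2)] vq by auto
  have suv: "-1 < inner u v" "inner u v \<le> 1" using sph_pair[OF U(1) V(1) U(2) V(2)] by auto
  have spq: "-1 < inner p q" "inner p q \<le> 1" using sph_pair[OF Pp(1) Qq(1) Pp(2) Qq(2)] by auto
  have spv: "-1 < inner p v" "inner p v \<le> 1" using sph_pair[OF Pp(1) V(1) Pp(2) V(2)] by auto
  have suq: "-1 < inner u q" "inner u q \<le> 1" using sph_pair[OF U(1) Qq(1) U(2) Qq(2)] by auto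
  define sx where "sx = sqrt (1 - (inner u p)^2)"
  define sy where "sy = sqrt (1 - (inner v q)^2)"
  have sxp: "1 - (inner u p)^2 > 0" using sup by (simp add: abs_square_less_1 abs_less_iff)
  have syp: "1 - (inner v q)^2 > 0" using svq by (simp add: abs_square_less_1 abs_less_iff)
  have eq: "cosq K A P B Q = (inner p q + 1 * inner u p * inner v q) / (sx * sy)
          - 1 * (inner u p + inner p v) * (inner v q + inner u q) / ((1 + 1 * inner u v) * sx * sy)"
    unfolding cosq_def Let_def rho if_P[OF True]
    unfolding u_def[symmetric] p_def[symmetric] v_def[symmetric] q_def[symmetric]
    using sup svq suv spq spv suq by (simp add: sin_arccos sx_def sy_def)
  have "\<bar>(inner p q + 1 * inner u p * inner v q) / (sx * sy)
          - 1 * (inner u p + inner p v) * (inner v q + inner u q) / ((1 + 1 * inner u v) * sx * sy)\<bar> \<le> 1"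
    by (rule core[where g = inner])
       (use U Pp V Qq sxp syp suv in \<open>auto simp: inner_add_left inner_diff_left inner_add_right inner_diff_right inner_commute sx_def sy_def\<close>)
  thus ?thesis using eq by simp
next
  case False
  hence Kn: "K < 0" using assms(1) by simp
  define k where "k = sqrt (- K)"
  have k0: "k > 0" using Kn by (simp add: k_def)
  have kk: "k * k = - K" using Kn by (simp add: k_def)
  have kabs: "sqrt \<bar>K\<bar> = k" using Kn by (simp add: k_def)
  have memS: "\<And>X. X \<in> S3 K \<Longrightarrow> minkowski (k *\<^sub>R X) (k *\<^sub>R X) = -1 \<and> (k *\<^sub>R X)$1 > 0"
    using Kn k0 kk by (simp add: S3_def mink_scL mink_scR mult.assoc[symmetric])
  have rho: "\<And>X Y. sqrt \<bar>K\<bar> * rhoK K X Y = arcosh (- minkowski (k *\<^sub>R X) (k *\<^sub>R Y))"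
    using Kn k0 kk unfolding kabs by (simp add: rhoK_def mink_scL mink_scR mult.assoc[symmetric] k_def[symmetric])
  define u where "u = k *\<^sub>R A"
  define p where "p = k *\<^sub>R P"
  define v where "v = k *\<^sub>R B"
  define q where "q = k *\<^sub>R Q"
  have U: "minkowski u u = -1" "u$1 > 0" using memS[OF assms(2)] by (simp_all add: u_def)
  have Pp: "minkowski p p = -1" "p$1 > 0" using memS[OF assms(3)] by (simp_all add: p_def)
  have V: "minkowski v v = -1" "v$1 > 0" using memS[OF assms(4)] by (simp_all add: v_def)
  have Qq: "minkowski q q = -1" "q$1 > 0" using memS[OF assms(5)] by (simp_all add: q_def)
  have up: "u \<noteq> p" using assms(6) k0 by (simp add: u_def p_def)
  have vq: "v \<noteq> q" using assms(7) k0 by (simp add: v_def q_def)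
  have sup: "minkowski u p < -1" using hyp_pair[OF U(1) Pp(1) U(2) Pp(2)] up by auto
  have svq: "minkowski v q < -1" using hyp_pair[OF V(1) Qq(1) V(2) Qq(2)] vq by auto
  have suv: "minkowski u v \<le> -1" using hyp_pair[OF U(1) V(1) U(2) V(2)] by auto
  have spq: "minkowski p q \<le> -1" using hyp_pair[OF Pp(1) Qq(1) Pp(2) Qq(2)] by auto
  have spv: "minkowski p v \<le> -1" using hyp_pair[OF Pp(1) V(1) Pp(2) V(2)] by auto
  have suq: "minkowski u q \<le> -1" using hyp_pair[OF U(1) Qq(1) U(2) Qq(2)] by auto
  define sx where "sx = sqrt ((minkowski u p)^2 - 1)"
  define sy where "sy = sqrt ((minkowski v q)^2 - 1)"
  have sxp: "(minkowski u p)^2 - 1 > 0"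
  proof -
    have "1^2 < (- minkowski u p)^2" using sup by (intro power_strict_mono) auto
    thus ?thesis by simp
  qed
  have syp: "(minkowski v q)^2 - 1 > 0"
  proof -
    have "1^2 < (- minkowski v q)^2" using svq by (intro power_strict_mono) auto
    thus ?thesis by simp
  qed
  have eq: "cosq K A P B Q =
      ((- minkowski u p) + (- minkowski p v)) * ((- minkowski v q) + (- minkowski u q))
        / ((1 + (- minkowski u v)) * sx * sy)
      - ((- minkowski p q) + (- minkowski u p) * (- minkowski v q)) / (sx * sy)"
    unfolding cosq_def Let_def rho if_not_P[OF False]
    unfolding u_def[symmetric] p_def[symmetric] v_def[symmetric] q_def[symmetric]
    using sup svq suv spq spv suq by (simp add: sinh_arcosh_real sx_def sy_def)
  have "\<bar>(minkowski p q + -1 * minkowski u p * minkowski v q) / (sx * sy)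
          - (-1) * (minkowski u p + minkowski p v) * (minkowski v q + minkowski u q)
            / ((1 + -1 * minkowski u v) * sx * sy)\<bar> \<le> 1"
  proof (rule core[where g = minkowski])
    fix w assume "minkowski w v = 0"
    thus "minkowski w w \<ge> 0" using mink_pos[OF V(1)] by simp
  qed (use U Pp V Qq sxp syp suv in \<open>auto simp: mink_addL mink_diffL mink_scL mink_addR mink_diffR mink_scR mink_sym sx_def sy_def\<close>)
  thus ?thesis unfolding eq rearr .
qed

end
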